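(* For every index coding instance $\mathcal{I}=\{(i\mid A_i):i\in[m]\}$, $\beta_{\text{FP-UMCD}}(\mathcal{I})\le\beta_{\text{FPCC}}(\mathcal{I})$.
   Context: For $M\subseteq[m]$, the subinstance $M$ has receivers $M$ and side information $A_i\cap M$; $\beta_{\text{MDS}}(M)=|M|-\min_{i\in M}|M\cap A_i|$. $\beta_{\text{FPCC}}(\mathcal{I})=\min\sum_j\gamma_j\beta_{\text{MDS}}(M_j)$ and $\beta_{\text{FP-UMCD}}(\mathcal{I})=\min\sum_j\gamma_j\beta_{\text{UMCD}}(M_j)$, both minima over finite families of (possibly overlapping) subsets $M_1,\dots,M_n\subseteq[m]$ and weights $\gamma_j\in[0,1]$ with $\sum_{j:\,i\in M_j}\gamma_j\ge1$ for all $i\in[m]$. UMCD algorithm on a (sub)instance with receiver set $V$: $B_i=V\setminus(A_i\cup\{i\})$ (within $V$); $\boldsymbol{G}_{[k]}^L$ is the submatrix of the first $k$ rows and columns $L$ of a $0/1$ matrix, $\mathrm{mcm}$ the maximum number of $1$-entries in distinct rows and columns (0 if no columns); $N=V$, $k=0$; while $N\ne\emptyset$: $k\leftarrow k+1$; pick $w\in N$ minimizing $|A_w|$ (arbitrary tie-breaking); row $k$ is the indicator of $\{w\}\cup A_w$; remove $w$; remove every $i\in N$ with $\mathrm{mcm}(\boldsymbol{G}_{[k]}^{\{i\}\cup B_i})=\mathrm{mcm}(\boldsymbol{G}_{[k]}^{B_i})+1$; output $\beta_{\text{UMCD}}=k$ (a fixed execution for each subinstance). *)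

theory Defs
  imports Complex_Main
begin

text \<open>An index coding instance with receivers [m] = {1..m}; receiver i wants message i
  and has side information A i, a subset of [m] not containing i.\<close>
definition ic_instance :: "nat \<Rightarrow> (nat \<Rightarrow> nat set) \<Rightarrow> bool" where
  "ic_instance m A \<longleftrightarrow> (\<forall>i\<in>{1..m}. A i \<subseteq> {1..m} - {i})"

text \<open>MDS code length of the subinstance on receiver set M (side information A i \<inter> M).\<close>
definition beta_MDS :: "(nat \<Rightarrow> nat set) \<Rightarrow> nat set \<Rightarrow> nat" where
  "beta_MDS A M = card M - Min ((\<lambda>i. card (M \<inter> A i)) ` M)"

text \<open>Maximum number of 1-entries in distinct rows and columns of the 0/1 matrix whose
  rows are given by the list of sets (row r has a 1 in column c iff c \<in> rows ! r),
  restricted to the columns L.\<close>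
definition mcm :: "nat set list \<Rightarrow> nat set \<Rightarrow> nat" where
  "mcm rows L = Max {card P | P. P \<subseteq> {(r, c). r < length rows \<and> c \<in> L \<and> c \<in> rows ! r}
                              \<and> inj_on fst P \<and> inj_on snd P}"

text \<open>One iteration of the UMCD algorithm on the subinstance with receiver set V.
  State: (remaining set N, rows of the matrix built so far).\<close>
definition umcd_step :: "(nat \<Rightarrow> nat set) \<Rightarrow> nat set \<Rightarrow>
    nat set \<times> nat set list \<Rightarrow> nat set \<times> nat set list \<Rightarrow> bool" where
  "umcd_step A V s s' \<longleftrightarrow>
     (let N = fst s; rows = snd s;
          B = (\<lambda>i. V - (A i \<union> {i})) in
      N \<noteq> {} \<and>
      (\<exists>w \<in> N. (\<forall>u\<in>N. card (A w \<inter> V) \<le> card (A u \<inter> V)) \<and>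
         (let rows' = rows @ [insert w (A w \<inter> V)] in
          s' = ({i \<in> N - {w}. mcm rows' (insert i (B i)) \<noteq> mcm rows' (B i) + 1}, rows'))))"

definition umcd_output :: "(nat \<Rightarrow> nat set) \<Rightarrow> nat set \<Rightarrow> nat \<Rightarrow> bool" where
  "umcd_output A V k \<longleftrightarrow>
     (\<exists>rows. (umcd_step A V)\<^sup>*\<^sup>* (V, []) ({}, rows) \<and> length rows = k)"

definition fp_value :: "nat \<Rightarrow> (nat set \<Rightarrow> nat) \<Rightarrow> real" where
  "fp_value m f = Inf {(\<Sum>j<n. (\<gamma> :: nat \<Rightarrow> real) j * real (f (Ms j))) | (n::nat) (Ms :: nat \<Rightarrow> nat set) \<gamma>.
       (\<forall>j<n. Ms j \<subseteq> {1..m} \<and> Ms j \<noteq> {} \<and> 0 \<le> \<gamma> j \<and> \<gamma> j \<le> 1) \<and>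
       (\<forall>i\<in>{1..m}. 1 \<le> (\<Sum>j\<in>{j. j < n \<and> i \<in> Ms j}. \<gamma> j))}"

definition beta_FPCC :: "nat \<Rightarrow> (nat \<Rightarrow> nat set) \<Rightarrow> real" where
  "beta_FPCC m A = fp_value m (beta_MDS A)"

end

theory Submission
  imports Defs
begin

lemma hall:
  fixes S :: "'i \<Rightarrow> 'a set"
  assumes "finite I" "\<forall>i\<in>I. finite (S i)"
    "\<forall>J\<subseteq>I. card J \<le> card (\<Union>(S ` J))"
  shows "\<exists>f. inj_on f I \<and> (\<forall>i\<in>I. f i \<in> S i)"
  using assms
proof (induction "card I" arbitrary: I S rule: less_induct)
  case less
  show ?case
  proof (cases "I = {}")
    case True then show ?thesis by auto
  next
    case False
    show ?thesis
    proof (cases "\<exists>J. J \<subseteq> I \<and> J \<noteq> {} \<and> J \<noteq> I \<and> card (\<Union>(S ` J)) \<le> card J")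
      case True
      then obtain J where J: "J \<subseteq> I" "J \<noteq> {}" "J \<noteq> I" "card (\<Union>(S ` J)) \<le> card J" by blast
      have finJ: "finite J" using J(1) less.prems(1) finite_subset by blast
      have cJ: "card J < card I" using J less.prems(1) by (meson psubsetI psubset_card_mono)
      have finU: "\<And>K. K \<subseteq> I \<Longrightarrow> finite (\<Union>(S ` K))"
        using less.prems(1,2) by (meson finite_UN_I finite_subset subsetD)
      have "\<exists>f. inj_on f J \<and> (\<forall>i\<in>J. f i \<in> S i)"
      proof (rule less.hyps[OF cJ finJ])
        show "\<forall>i\<in>J. finite (S i)" using less.prems(2) J(1) by blast
        show "\<forall>Ja\<subseteq>J. card Ja \<le> card (\<Union>(S ` Ja))" using less.prems(3) J(1) by blast
      qed
      then obtain f1 where f1: "inj_on f1 J" "\<forall>i\<in>J. f1 i \<in> S i" by blast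
      define S2 where "S2 = (\<lambda>i. S i - \<Union>(S ` J))"
      have eqJ: "card (\<Union>(S ` J)) = card J"
        using J(4) less.prems(3) J(1) by (meson le_antisym)
      have "\<exists>f. inj_on f (I - J) \<and> (\<forall>i\<in>I - J. f i \<in> S2 i)"
      proof (rule less.hyps)
        have "I - J \<subset> I" using J(1,2) by blast
        thus "card (I - J) < card I" using less.prems(1) by (rule psubset_card_mono[rotated])
        show "finite (I - J)" using less.prems(1) by simp
        show "\<forall>i\<in>I - J. finite (S2 i)" using less.prems(2) S2_def by auto
        show "\<forall>K\<subseteq>I - J. card K \<le> card (\<Union>(S2 ` K))"
        proof (intro allI impI)
          fix K assume K: "K \<subseteq> I - J"
          have KJ: "K \<union> J \<subseteq> I" using K J(1) by auto
          have disj: "K \<inter> J = {}" using K by auto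
          have finK: "finite K" using K less.prems(1) finite_subset by blast
          have "\<Union>(S2 ` K) = \<Union>(S ` (K \<union> J)) - \<Union>(S ` J)" unfolding S2_def by auto
          hence "card (\<Union>(S2 ` K)) = card (\<Union>(S ` (K \<union> J))) - card (\<Union>(S ` J))"
            by (simp add: card_Diff_subset finU J(1) KJ)
          moreover have "card (K \<union> J) \<le> card (\<Union>(S ` (K \<union> J)))" using less.prems(3) KJ by blast
          moreover have "card (K \<union> J) = card K + card J" using card_Un_disjoint[OF finK finJ disj] .
          ultimately show "card K \<le> card (\<Union>(S2 ` K))" using eqJ by linarith
        qed
      qed
      then obtain f2 where f2: "inj_on f2 (I - J)" "\<forall>i\<in>I - J. f2 i \<in> S2 i" by blast
      define f where "f = (\<lambda>i. if i \<in> J then f1 i else f2 i)"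
      have "inj_on f I"
      proof (rule inj_onI)
        fix x y assume xy: "x \<in> I" "y \<in> I" "f x = f y"
        show "x = y"
        proof (cases "x \<in> J"; cases "y \<in> J")
          assume "x \<in> J" "y \<in> J" thus ?thesis using xy f1(1) f_def by (auto dest: inj_onD)
        next
          assume "x \<notin> J" "y \<notin> J" thus ?thesis using xy f2(1) f_def by (auto dest: inj_onD)
        next
          assume a: "x \<in> J" "y \<notin> J"
          have "f1 x \<in> \<Union>(S ` J)" using f1(2) a by blast
          moreover have "f2 y \<notin> \<Union>(S ` J)" using f2(2) a xy(2) unfolding S2_def by blast
          ultimately show ?thesis using xy a f_def by auto
        next
          assume a: "x \<notin> J" "y \<in> J"
          have "f1 y \<in> \<Union>(S ` J)" using f1(2) a by blast
          moreover have "f2 x \<notin> \<Union>(S ` J)" using f2(2) a xy(1) unfolding S2_def by blast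
          ultimately show ?thesis using xy a f_def by auto
        qed
      qed
      moreover have "\<forall>i\<in>I. f i \<in> S i" using f1(2) f2(2) f_def S2_def by auto
      ultimately show ?thesis by blast
    next
      case False2: False
      obtain i where i: "i \<in> I" using False by blast
      have "card {i} \<le> card (\<Union>(S ` {i}))" using less.prems(3) i by blast
      hence "1 \<le> card (S i)" by simp
      then obtain x where x: "x \<in> S i" by (metis card.empty ex_in_conv not_one_le_zero)
      define S' where "S' = (\<lambda>j. S j - {x})"
      have "\<exists>f. inj_on f (I - {i}) \<and> (\<forall>j\<in>I - {i}. f j \<in> S' j)"
      proof (rule less.hyps)
        show "card (I - {i}) < card I" using i less.prems(1) by (meson card_Diff1_less)
        show "finite (I - {i})" using less.prems(1) by simp
        show "\<forall>j\<in>I - {i}. finite (S' j)" using less.prems(2) S'_def by auto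
        show "\<forall>K\<subseteq>I - {i}. card K \<le> card (\<Union>(S' ` K))"
        proof (intro allI impI)
          fix K assume K: "K \<subseteq> I - {i}"
          show "card K \<le> card (\<Union>(S' ` K))"
          proof (cases "K = {}")
            case True thus ?thesis by simp
          next
            case False
            have "K \<noteq> I" using K i by auto
            moreover have "\<not> (K \<subseteq> I \<and> K \<noteq> {} \<and> K \<noteq> I \<and> card (\<Union>(S ` K)) \<le> card K)"
              using False2 by blast
            ultimately have lt: "card K < card (\<Union>(S ` K))" using False K by auto
            have fin: "finite (\<Union>(S ` K))" using K less.prems(1,2)
              by (meson Diff_subset finite_UN_I finite_subset subsetD)
            have "\<Union>(S' ` K) = \<Union>(S ` K) - {x}" unfolding S'_def by auto
            hence "card (\<Union>(S' ` K)) \<ge> card (\<Union>(S ` K)) - 1"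
              by (simp add: card_Diff_singleton_if)
            thus ?thesis using lt by linarith
          qed
        qed
      qed
      then obtain g where g: "inj_on g (I - {i})" "\<forall>j\<in>I - {i}. g j \<in> S' j" by blast
      define f where "f = g(i := x)"
      have "inj_on f I"
      proof -
        have "inj_on f (I - {i})" using g(1) f_def by (simp add: inj_on_def)
        moreover have "f i \<notin> f ` (I - {i})" using g(2) f_def S'_def by auto
        ultimately have "inj_on f (insert i (I - {i}))" by (intro iffD2[OF inj_on_insert]) auto
        moreover have "insert i (I - {i}) = I" using i by blast
        ultimately show ?thesis by simp
      qed
      moreover have "\<forall>j\<in>I. f j \<in> S j" using g(2) x f_def S'_def by auto
      ultimately show ?thesis by blast
    qed
  qed
qed

definition validm :: "nat set list \<Rightarrow> nat set \<Rightarrow> (nat \<times> nat) set \<Rightarrow> bool" where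
  "validm rows L P \<longleftrightarrow> P \<subseteq> {(r, c). r < length rows \<and> c \<in> L \<and> c \<in> rows ! r}
                              \<and> inj_on fst P \<and> inj_on snd P"

lemma mcm_alt: "mcm rows L = Max {card P | P. validm rows L P}"
  unfolding mcm_def validm_def by simp

lemma validm_finite: "finite L \<Longrightarrow> validm rows L P \<Longrightarrow> finite P"
  unfolding validm_def
  by (rule finite_subset[of _ "{..<length rows} \<times> L"]) auto

lemma validm_card_le: "finite L \<Longrightarrow> validm rows L P \<Longrightarrow> card P \<le> card L"
proof -
  assume f: "finite L" and v: "validm rows L P"
  have "card P = card (snd ` P)" using v unfolding validm_def by (simp add: card_image)
  also have "\<dots> \<le> card L" using v f unfolding validm_def by (intro card_mono) auto
  finally show ?thesis .
qed

lemma validm_empty: "validm rows L {}"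
  unfolding validm_def by auto

lemma mcm_set_finite: "finite L \<Longrightarrow> finite {card P | P. validm rows L P}"
  by (rule finite_subset[of _ "{..card L}"]) (auto dest: validm_card_le)

lemma mcm_ge: "finite L \<Longrightarrow> validm rows L P \<Longrightarrow> card P \<le> mcm rows L"
  unfolding mcm_alt by (rule Max_ge) (auto simp: mcm_set_finite)

lemma mcm_ex: "finite L \<Longrightarrow> \<exists>P. validm rows L P \<and> card P = mcm rows L"
proof -
  assume f: "finite L"
  have "mcm rows L \<in> {card P | P. validm rows L P}"
    unfolding mcm_alt using f validm_empty by (intro Max_in) (auto simp: mcm_set_finite)
  thus ?thesis by auto
qed

lemma mcm_le_card: "finite L \<Longrightarrow> mcm rows L \<le> card L"
  using mcm_ex validm_card_le by metis

lemma mcm_mono: "L \<subseteq> L' \<Longrightarrow> finite L' \<Longrightarrow> mcm rows L \<le> mcm rows L'"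
proof -
  assume s: "L \<subseteq> L'" and f: "finite L'"
  hence fL: "finite L" by (rule finite_subset)
  obtain P where P: "validm rows L P" "card P = mcm rows L" using mcm_ex[OF fL] by blast
  have "validm rows L' P" using P(1) s unfolding validm_def by auto
  thus ?thesis using P(2) mcm_ge[OF f] by metis
qed

lemma mcm_drop: "finite L \<Longrightarrow> finite X \<Longrightarrow> mcm rows L \<le> mcm rows (L - X) + card X"
proof -
  assume f: "finite L" and fX: "finite X"
  obtain P where P: "validm rows L P" "card P = mcm rows L" using mcm_ex[OF f] by blast
  have fP: "finite P" using validm_finite[OF f P(1)] .
  define P' where "P' = {p\<in>P. snd p \<notin> X}"
  have v': "validm rows (L - X) P'" using P(1) unfolding validm_def P'_def
    by (auto intro: inj_on_subset)
  have "card (P - P') \<le> card X"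
  proof -
    have "card (P - P') = card (snd ` (P - P'))"
      using P(1) unfolding validm_def by (intro card_image[symmetric]) (auto intro: inj_on_subset)
    also have "\<dots> \<le> card X" using fX unfolding P'_def by (intro card_mono) auto
    finally show ?thesis .
  qed
  moreover have "card P = card P' + card (P - P')"
    using fP unfolding P'_def by (metis (no_types, lifting) card_Diff_subset finite_subset
        le_add_diff_inverse mem_Collect_eq subsetI card_mono)
  moreover have "card P' \<le> mcm rows (L - X)" using mcm_ge[OF _ v'] f by simp
  ultimately show ?thesis using P(2) by linarith
qed

lemma mcm_insert: "finite L \<Longrightarrow> mcm rows (insert i L) \<le> mcm rows L + 1"
proof -
  assume f: "finite L"
  have "mcm rows (insert i L) \<le> mcm rows (insert i L - {i}) + card {i}"
    using f by (intro mcm_drop) auto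
  moreover have "mcm rows (insert i L - {i}) \<le> mcm rows L" using f by (intro mcm_mono) auto
  ultimately show ?thesis by simp
qed

lemma mcm_T0:
  assumes f: "finite L" and T0: "T0 \<subseteq> {..<length rows}"
  shows "mcm rows L + card T0 \<le> length rows + card ((\<Union>t\<in>T0. rows ! t) \<inter> L)"
proof -
  obtain P where P: "validm rows L P" "card P = mcm rows L" using mcm_ex[OF f] by blast
  have fP: "finite P" using validm_finite[OF f P(1)] .
  define P1 where "P1 = {p\<in>P. fst p \<in> T0}"
  define P2 where "P2 = {p\<in>P. fst p \<notin> T0}"
  have "card P1 = card (snd ` P1)"
    using P(1) unfolding validm_def P1_def by (intro card_image[symmetric]) (auto intro: inj_on_subset)
  also have "\<dots> \<le> card ((\<Union>t\<in>T0. rows ! t) \<inter> L)"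
    using P(1) f unfolding validm_def P1_def by (intro card_mono) fastforce+
  finally have c1: "card P1 \<le> card ((\<Union>t\<in>T0. rows ! t) \<inter> L)" .
  have "card P2 = card (fst ` P2)"
    using P(1) unfolding validm_def P2_def by (intro card_image[symmetric]) (auto intro: inj_on_subset)
  also have "\<dots> \<le> card ({..<length rows} - T0)"
    using P(1) unfolding validm_def P2_def by (intro card_mono) auto
  also have "\<dots> = length rows - card T0" using T0 by (simp add: card_Diff_subset finite_subset)
  finally have c2: "card P2 \<le> length rows - card T0" .
  have "card T0 \<le> length rows" using T0 by (metis card_lessThan card_mono finite_lessThan)
  moreover have "card P = card P1 + card P2"
    unfolding P1_def P2_def using fP by (subst card_Un_disjoint[symmetric]) (auto intro: arg_cong[where f=card])
  ultimately show ?thesis using c1 c2 P(2) by linarith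
qed

lemma mcm_full:
  assumes f: "finite L"
    and H: "\<forall>T\<subseteq>{..<length rows}. card T \<le> card ((\<Union>t\<in>T. rows ! t) \<inter> L)"
  shows "length rows \<le> mcm rows L"
proof -
  define S where "S = (\<lambda>t. rows ! t \<inter> L)"
  have "\<exists>g. inj_on g {..<length rows} \<and> (\<forall>i\<in>{..<length rows}. g i \<in> S i)"
  proof (rule hall)
    show "\<forall>J\<subseteq>{..<length rows}. card J \<le> card (\<Union>(S ` J))"
      using H unfolding S_def by (metis UN_extend_simps(4))
  qed (use f S_def in auto)
  then obtain g where g: "inj_on g {..<length rows}" "\<forall>i\<in>{..<length rows}. g i \<in> S i" by blast
  define P where "P = (\<lambda>t. (t, g t)) ` {..<length rows}"
  have v: "validm rows L P" unfolding validm_def P_def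
  proof (intro conjI)
    show "inj_on snd ((\<lambda>t. (t, g t)) ` {..<length rows})" using g(1)
      by (auto simp: inj_on_def)
  qed (use g(2) S_def in \<open>auto simp: inj_on_def\<close>)
  have "card P = length rows" unfolding P_def by (subst card_image) (auto simp: inj_on_def)
  thus ?thesis using mcm_ge[OF f v] by simp
qed

lemma mcm_nil: "mcm [] L = 0"
  unfolding mcm_def by simp

definition expd :: "nat set list \<Rightarrow> nat set \<Rightarrow> nat \<Rightarrow> bool" where
  "expd rows V d \<longleftrightarrow> (\<forall>t<length rows. rows ! t \<subseteq> V) \<and>
     (\<forall>T\<subseteq>{..<length rows}. T \<noteq> {} \<longrightarrow> card T + d \<le> card (\<Union>t\<in>T. rows ! t))"

lemma hall_part:
  assumes fV: "finite V" and E: "expd rows V d" and D: "D \<subseteq> V" "card D \<le> d"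
  shows "length rows \<le> mcm rows (V - D)"
proof (rule mcm_full)
  show "finite (V - D)" using fV by simp
  show "\<forall>T\<subseteq>{..<length rows}. card T \<le> card ((\<Union>t\<in>T. rows ! t) \<inter> (V - D))"
  proof (intro allI impI)
    fix T assume T: "T \<subseteq> {..<length rows}"
    show "card T \<le> card ((\<Union>t\<in>T. rows ! t) \<inter> (V - D))"
    proof (cases "T = {}")
      case True thus ?thesis by simp
    next
      case False
      hence c: "card T + d \<le> card (\<Union>t\<in>T. rows ! t)" using E T unfolding expd_def by blast
      have sub: "(\<Union>t\<in>T. rows ! t) \<subseteq> V" using E T unfolding expd_def by auto
      have eq: "(\<Union>t\<in>T. rows ! t) \<inter> (V - D) = (\<Union>t\<in>T. rows ! t) - D" using sub by auto
      have "card (\<Union>t\<in>T. rows ! t) - card D \<le> card ((\<Union>t\<in>T. rows ! t) - D)"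
        using finite_subset[OF D(1) fV] by (rule diff_card_le_card_Diff)
      thus ?thesis unfolding eq using c D(2) by linarith
    qed
  qed
qed

lemma core_lower:
  assumes fV: "finite V" and E: "expd rows V d" and i: "i \<in> V" "i \<notin> A i"
    and dle: "d \<le> card (A i \<inter> V)"
  shows "length rows + d \<le> mcm rows (insert i (V - (A i \<union> {i}))) + card (A i \<inter> V)"
proof -
  obtain D where D: "D \<subseteq> A i \<inter> V" "card D = d"
    using obtain_subset_with_card_n[OF dle] by metis
  have fD: "finite D" using D(1) fV by (meson finite_Int finite_subset)
  have eq: "insert i (V - (A i \<union> {i})) = (V - D) - ((A i \<inter> V) - D)" using i D(1) by auto
  have "length rows \<le> mcm rows (V - D)" using hall_part[OF fV E] D by auto
  also have "\<dots> \<le> mcm rows ((V - D) - ((A i \<inter> V) - D)) + card ((A i \<inter> V) - D)"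
    using fV by (intro mcm_drop) auto
  also have "card ((A i \<inter> V) - D) = card (A i \<inter> V) - d"
    using D fD by (simp add: card_Diff_subset)
  finally show ?thesis using eq dle by simp
qed

lemma core_a:
  assumes fV: "finite V" and E: "expd rows V d" and i: "i \<in> V" "i \<notin> A i"
    and dle: "d \<le> card (A i \<inter> V)"
    and surv: "mcm rows (insert i (V - (A i \<union> {i}))) \<noteq> mcm rows (V - (A i \<union> {i})) + 1"
  shows "length rows + d + 1 \<le> card V"
proof -
  let ?B = "V - (A i \<union> {i})"
  have l: "length rows + d \<le> mcm rows (insert i ?B) + card (A i \<inter> V)"
    using core_lower[where A=A, OF fV E i dle] .
  have "mcm rows (insert i ?B) \<le> mcm rows ?B + 1" using fV by (intro mcm_insert) auto
  moreover have "mcm rows ?B \<le> mcm rows (insert i ?B)" using fV by (intro mcm_mono) auto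
  ultimately have "mcm rows (insert i ?B) \<le> mcm rows ?B" using surv by linarith
  also have "\<dots> \<le> card ?B" using fV by (intro mcm_le_card) auto
  finally have m1: "mcm rows (insert i ?B) \<le> card ?B" .
  have "?B = V - insert i (A i \<inter> V)" by auto
  hence "card ?B = card V - card (insert i (A i \<inter> V))"
    using i fV by (metis card_Diff_subset finite_Int finite_insert Int_lower2 insert_subset)
  also have "card (insert i (A i \<inter> V)) = card (A i \<inter> V) + 1" using i fV by simp
  finally have "mcm rows (insert i ?B) \<le> card V - (card (A i \<inter> V) + 1)" using m1 by simp
  moreover have "card (insert i (A i \<inter> V)) \<le> card V" using i fV by (intro card_mono) auto
  moreover have "card (insert i (A i \<inter> V)) = card (A i \<inter> V) + 1" using i fV by simp
  ultimately show ?thesis using l by linarith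
qed

lemma core_b:
  assumes fV: "finite V" and E: "expd rows V d" and i: "i \<in> V" "i \<notin> A i"
    and dle: "d \<le> card (A i \<inter> V)"
    and surv: "mcm rows (insert i (V - (A i \<union> {i}))) \<noteq> mcm rows (V - (A i \<union> {i})) + 1"
  shows "expd (rows @ [insert i (A i \<inter> V)]) V d"
proof -
  let ?k = "length rows"
  let ?R = "insert i (A i \<inter> V)"
  let ?B = "V - (A i \<union> {i})"
  let ?rs = "rows @ [?R]"
  have nth': "\<And>t. t < ?k \<Longrightarrow> ?rs ! t = rows ! t" by (simp add: nth_append)
  have nthk: "?rs ! ?k = ?R" by simp
  have cR: "card ?R = card (A i \<inter> V) + 1" using i fV by simp
  have RV: "?R \<subseteq> V" using i by auto
  have part1: "\<forall>t<length ?rs. ?rs ! t \<subseteq> V"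
  proof (intro allI impI)
    fix t assume "t < length ?rs"
    hence "t < ?k \<or> t = ?k" by auto
    thus "?rs ! t \<subseteq> V" using nth' nthk E RV unfolding expd_def by auto
  qed
  have part2: "card T + d \<le> card (\<Union>t\<in>T. ?rs ! t)"
    if T: "T \<subseteq> {..<length ?rs}" "T \<noteq> {}" for T
  proof (cases "?k \<in> T")
    case False
    hence T': "T \<subseteq> {..<?k}" using T(1) by (auto simp: subset_iff less_Suc_eq)
    have "(\<Union>t\<in>T. ?rs ! t) = (\<Union>t\<in>T. rows ! t)" using T' nth' by auto
    thus ?thesis using E T' T(2) unfolding expd_def by auto
  next
    case True
    define T0 where "T0 = T - {?k}"
    have T0: "T0 \<subseteq> {..<?k}" using T(1) T0_def by auto
    have fT0: "finite T0" using T0 finite_subset by blast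
    have Teq: "T = insert ?k T0" using True T0_def by auto
    have "?k \<notin> T0" using T0_def by simp
    hence cT: "card T = card T0 + 1" using fT0 by (subst Teq) simp
    define U0 where "U0 = (\<Union>t\<in>T0. rows ! t)"
    have Ueq: "(\<Union>t\<in>T. ?rs ! t) = U0 \<union> ?R" unfolding U0_def using Teq nth' T0 by auto
    have U0V: "U0 \<subseteq> V" unfolding U0_def using E T0 unfolding expd_def by auto
    have fU0: "finite U0" using U0V fV finite_subset by blast
    show ?thesis
    proof (cases "T0 = {}")
      case True
      hence "(\<Union>t\<in>T. ?rs ! t) = ?R" using Ueq U0_def by simp
      thus ?thesis using cT True cR dle by simp
    next
      case False
      have cU0: "card T0 + d \<le> card U0" using E T0 False unfolding expd_def U0_def by blast
      show ?thesis
      proof (rule ccontr)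
        assume "\<not> ?thesis"
        hence lt: "card (U0 \<union> ?R) < card T0 + 1 + d" using Ueq cT by simp
        have "card U0 \<le> card (U0 \<union> ?R)" using fU0 fV RV by (intro card_mono) auto
        hence "card (U0 \<union> ?R) = card U0" using lt cU0 by linarith
        hence "U0 = U0 \<union> ?R" using fU0 fV RV by (intro card_subset_eq) auto
        hence RU: "?R \<subseteq> U0" by blast
        have cU: "card U0 = card T0 + d" using lt cU0 \<open>card (U0 \<union> ?R) = card U0\<close> by linarith
        have "mcm rows ?B + card T0 \<le> ?k + card (U0 \<inter> ?B)"
          unfolding U0_def using fV T0 by (intro mcm_T0) auto
        moreover have "card (U0 \<inter> ?B) \<le> card (U0 - ?R)" using fU0 by (intro card_mono) auto
        moreover have "card (U0 - ?R) = card U0 - card ?R" using RU fU0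
          by (meson card_Diff_subset finite_subset)
        moreover have "card ?R \<le> card U0" using RU fU0 by (intro card_mono)
        ultimately have m1: "mcm rows ?B + card (A i \<inter> V) + 1 \<le> ?k + d"
          using cU cR by linarith
        have "?k + d \<le> mcm rows (insert i ?B) + card (A i \<inter> V)"
          using core_lower[where A=A, OF fV E i dle] .
        hence "mcm rows ?B + 1 \<le> mcm rows (insert i ?B)" using m1 by linarith
        moreover have "mcm rows (insert i ?B) \<le> mcm rows ?B + 1" using fV by (intro mcm_insert) auto
        ultimately show False using surv by linarith
      qed
    qed
  qed
  show ?thesis unfolding expd_def using part1 part2 by blast
qed

lemma umcd_bound:
  assumes ic: "ic_instance m A" and M: "M \<subseteq> {1..m}" "M \<noteq> {}" and out: "umcd_output A M k"
  shows "k \<le> beta_MDS A M"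
proof -
  define d where "d = Min ((\<lambda>i. card (M \<inter> A i)) ` M)"
  have fV: "finite M" using M(1) finite_subset by blast
  have notin: "\<And>i. i \<in> M \<Longrightarrow> i \<notin> A i" using ic M(1) unfolding ic_instance_def by blast
  have dle: "\<And>i. i \<in> M \<Longrightarrow> d \<le> card (A i \<inter> M)"
    unfolding d_def using fV by (metis (no_types, lifting) Int_commute Min_le finite_imageI image_eqI)
  define Inv where "Inv = (\<lambda>s::nat set \<times> nat set list. fst s \<subseteq> M \<and> expd (snd s) M d \<and> length (snd s) + d \<le> card M \<and>
     (\<forall>i\<in>fst s. mcm (snd s) (insert i (M - (A i \<union> {i}))) \<noteq> mcm (snd s) (M - (A i \<union> {i})) + 1))"
  obtain rows where r: "(umcd_step A M)\<^sup>*\<^sup>* (M, []) ({}, rows)" "length rows = k"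
    using out unfolding umcd_output_def by blast
  have "Inv ({}, rows)"
    using r(1)
  proof (induction rule: rtranclp_induct)
    case base
    obtain i where i: "i \<in> M" using M(2) by blast
    have "d \<le> card (A i \<inter> M)" using dle i .
    also have "\<dots> \<le> card M" using fV by (intro card_mono) auto
    finally show ?case unfolding Inv_def expd_def by (simp add: mcm_nil)
  next
    case (step s s')
    obtain N rows0 where s: "s = (N, rows0)" by (cases s)
    from step.hyps(2) obtain w where w: "w \<in> N"
      and s': "s' = ({i \<in> N - {w}. mcm (rows0 @ [insert w (A w \<inter> M)]) (insert i (M - (A i \<union> {i})))
                      \<noteq> mcm (rows0 @ [insert w (A w \<inter> M)]) (M - (A i \<union> {i})) + 1},
                    rows0 @ [insert w (A w \<inter> M)])"
      unfolding umcd_step_def Let_def s by auto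
    have I: "N \<subseteq> M" "expd rows0 M d"
      "mcm rows0 (insert w (M - (A w \<union> {w}))) \<noteq> mcm rows0 (M - (A w \<union> {w})) + 1"
      using step.IH w unfolding Inv_def s by auto
    have wM: "w \<in> M" using I(1) w by blast
    have a: "length rows0 + d + 1 \<le> card M"
      using core_a[where A=A, OF fV I(2) wM notin[OF wM] dle[OF wM] I(3)] .
    have b: "expd (rows0 @ [insert w (A w \<inter> M)]) M d"
      using core_b[where A=A, OF fV I(2) wM notin[OF wM] dle[OF wM] I(3)] .
    show ?case unfolding Inv_def s' using a b I(1) by auto
  qed
  hence "k + d \<le> card M" unfolding Inv_def using r(2) by simp
  thus ?thesis unfolding beta_MDS_def d_def by simp
qed

theorem proposition13:
  fixes m :: nat and A :: "nat \<Rightarrow> nat set" and beta_UMCD :: "nat set \<Rightarrow> nat"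
  assumes "ic_instance m A"
    and "\<And>M. M \<subseteq> {1..m} \<Longrightarrow> M \<noteq> {} \<Longrightarrow> umcd_output A M (beta_UMCD M)"
  shows "fp_value m beta_UMCD \<le> beta_FPCC m A"
proof -
  define C where "C = (\<lambda>n (Ms :: nat \<Rightarrow> nat set) (\<gamma> :: nat \<Rightarrow> real).
       (\<forall>j<n. Ms j \<subseteq> {1..m} \<and> Ms j \<noteq> {} \<and> 0 \<le> \<gamma> j \<and> \<gamma> j \<le> 1) \<and>
       (\<forall>i\<in>{1..m}. 1 \<le> (\<Sum>j\<in>{j. j < n \<and> i \<in> Ms j}. \<gamma> j)))"
  define S where "S = (\<lambda>f::nat set \<Rightarrow> nat. {(\<Sum>j<n. (\<gamma> :: nat \<Rightarrow> real) j * real (f (Ms j))) | (n::nat) (Ms :: nat \<Rightarrow> nat set) \<gamma>. C n Ms \<gamma>})"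
  have fp: "\<And>f. fp_value m f = Inf (S f)" unfolding fp_value_def S_def C_def by simp
  have key: "\<And>M. M \<subseteq> {1..m} \<Longrightarrow> M \<noteq> {} \<Longrightarrow> beta_UMCD M \<le> beta_MDS A M"
    using umcd_bound[OF assms(1)] assms(2) by blast
  have "Inf (S beta_UMCD) \<le> Inf (S (beta_MDS A))"
  proof (rule cInf_mono)
    show "S (beta_MDS A) \<noteq> {}"
    proof (cases "m = 0")
      case True
      have "C 0 (\<lambda>_. {}) (\<lambda>_. 0)" unfolding C_def using True by simp
      thus ?thesis unfolding S_def by blast
    next
      case False
      have "{j. j < (1::nat) \<and> i \<in> {1..m}} = {0}" if "i \<in> {1..m}" for i using that by auto
      hence "C 1 (\<lambda>_. {1..m}) (\<lambda>_. 1)" unfolding C_def using False by auto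
      thus ?thesis unfolding S_def by blast
    qed
    show "bdd_below (S beta_UMCD)"
    proof (rule bdd_belowI[of _ 0])
      fix x assume "x \<in> S beta_UMCD"
      then obtain n Ms \<gamma> where x: "x = (\<Sum>j<n. \<gamma> j * real (beta_UMCD (Ms j)))" "C n Ms \<gamma>"
        unfolding S_def by blast
      show "0 \<le> x" unfolding x(1) using x(2) unfolding C_def by (intro sum_nonneg) auto
    qed
    fix b assume "b \<in> S (beta_MDS A)"
    then obtain n Ms \<gamma> where b: "b = (\<Sum>j<n. \<gamma> j * real (beta_MDS A (Ms j)))" "C n Ms \<gamma>"
      unfolding S_def by blast
    have "(\<Sum>j<n. \<gamma> j * real (beta_UMCD (Ms j))) \<le> b"
      unfolding b(1)
    proof (rule sum_mono)
      fix j assume "j \<in> {..<n}"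
      hence "Ms j \<subseteq> {1..m}" "Ms j \<noteq> {}" "0 \<le> \<gamma> j" using b(2) unfolding C_def by auto
      thus "\<gamma> j * real (beta_UMCD (Ms j)) \<le> \<gamma> j * real (beta_MDS A (Ms j))"
        using key by (intro mult_left_mono) auto
    qed
    moreover have "(\<Sum>j<n. \<gamma> j * real (beta_UMCD (Ms j))) \<in> S beta_UMCD"
      unfolding S_def using b(2) by blast
    ultimately show "\<exists>a\<in>S beta_UMCD. a \<le> b" by blast
  qed
  thus ?thesis unfolding beta_FPCC_def fp by simp
qed

end
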